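(* Consider the setting and framework in the context with $\alpha_k=\frac{H+1}{H+k}$, and with policies generated by projected gradient descent-ascent: fix $\eta>0$, let $\mu_h^0(\cdot|s)$ and $\nu_h^0(\cdot|s)$ be uniform, and for $k\ge1$, $h\in[H]$, $s\in\mathcal S$, $$\mu_h^k(\cdot|s)=\mathcal P_{\Delta_{\mathcal A}}\Big(\mu_h^{k-1}(\cdot|s)+\eta\sum_b\nu_h^{k-1}(b|s)Q_h^{k-1}(s,\cdot,b)\Big),\quad \nu_h^k(\cdot|s)=\mathcal P_{\Delta_{\mathcal B}}\Big(\nu_h^{k-1}(\cdot|s)-\eta\sum_a\mu_h^{k-1}(a|s)Q_h^{k-1}(s,a,\cdot)\Big),$$ where $\mathcal P$ denotes Euclidean projection (these policies at step $h$, round $k$ are computed before $Q_h^k$). Then for all $k\ge1$ and $h\in[H]$, $$\mathrm{reg}_h^k\le\frac{2}{\eta}\cdot\frac{H+1}{H+k}+\frac{\eta\max\{A,B\}H^2}{2},$$ and, with uniform weights $\beta_k^t=1/k$, $$\overline{\mathrm{reg}}_h^k\le\frac{4}{\eta k}+\frac{\eta(A+B)H^2}{2}.$$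
   Context: Setting. A finite-horizon two-player zero-sum Markov game with finite state set $\mathcal S$, finite action sets $\mathcal A$ (max-player, $A=|\mathcal A|$) and $\mathcal B$ (min-player, $B=|\mathcal B|$), horizon $H\ge 1$, reward functions $r_h:\mathcal S\times\mathcal A\times\mathcal B\to[0,1]$ and transition kernels $\mathbb P_h(\cdot\mid s,a,b)$ on $\mathcal S$, $h\in[H]$. For $Q:\mathcal A\times\mathcal B\to\mathbb R$, $x\in\Delta_{\mathcal A}$, $y\in\Delta_{\mathcal B}$, write $\langle Q,x\times y\rangle=\sum_{a,b}x(a)y(b)Q(a,b)$. Framework. Given learning rates $\alpha_k\in(0,1]$ ($k\ge1$) with $\alpha_1=1$ and Markov policies $\mu_h^k(\cdot\mid s)\in\Delta_{\mathcal A}$, $\nu_h^k(\cdot\mid s)\in\Delta_{\mathcal B}$ ($k\ge1$, $h\in[H]$, $s\in\mathcal S$), define $Q_{H+1}^k\equiv 0$ for all $k$, $Q_h^0\equiv H-h+1$, and for $k\ge1$, $h=H,\dots,1$: $$Q_h^k(s,a,b)=(1-\alpha_k)Q_h^{k-1}(s,a,b)+\alpha_k\Big(r_h(s,a,b)+\sum_{s'}\mathbb P_h(s'\mid s,a,b)\langle Q_{h+1}^k(s',\cdot,\cdot),\mu_{h+1}^k(\cdot\mid s')\times\nu_{h+1}^k(\cdot\mid s')\rangle\Big)$$ (for $h=H$ the inner product term is $0$). Let $\alpha_k^t=\alpha_t\prod_{j=t+1}^k(1-\alpha_j)$ for $1\le t\le k$. Weighted regrets: for $h\in[H]$, $\mathrm{reg}_{h,\mu}^k(s)=\max_{z\in\Delta_{\mathcal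 A}}\sum_{t=1}^k\alpha_k^t\langle Q_h^t(s,\cdot,\cdot),z\times\nu_h^t(\cdot|s)\rangle-\sum_{t=1}^k\alpha_k^t\langle Q_h^t(s,\cdot,\cdot),\mu_h^t(\cdot|s)\times\nu_h^t(\cdot|s)\rangle$, $\mathrm{reg}_{h,\nu}^k(s)=\sum_{t=1}^k\alpha_k^t\langle Q_h^t(s,\cdot,\cdot),\mu_h^t(\cdot|s)\times\nu_h^t(\cdot|s)\rangle-\min_{z\in\Delta_{\mathcal B}}\sum_{t=1}^k\alpha_k^t\langle Q_h^t(s,\cdot,\cdot),\mu_h^t(\cdot|s)\times z\rangle$, $\mathrm{reg}_h^k=\max_{s}\max\{\mathrm{reg}_{h,\mu}^k(s),\mathrm{reg}_{h,\nu}^k(s)\}$. Given weights $\beta_k^t\ge0$ with $\sum_{t=1}^k\beta_k^t=1$, define $\overline{\mathrm{reg}}_{h,\mu}^k(s),\overline{\mathrm{reg}}_{h,\nu}^k(s)$ exactly as $\mathrm{reg}_{h,\mu}^k(s),\mathrm{reg}_{h,\nu}^k(s)$ but with $\alpha_k^t$ replaced by $\beta_k^t$, and $\overline{\mathrm{reg}}_h^k=\max_s\big(\overline{\mathrm{reg}}_{h,\mu}^k(s)+\overline{\mathrm{reg}}_{h,\nu}^k(s)\big)$. *)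

theory Defs
  imports Complex_Main
begin

definition simplex :: "('a::finite \<Rightarrow> real) set" where
  "simplex = {x. (\<forall>a. 0 \<le> x a) \<and> (\<Sum>a\<in>UNIV. x a) = 1}"

definition proj_simplex :: "('a::finite \<Rightarrow> real) \<Rightarrow> ('a \<Rightarrow> real)" where
  "proj_simplex v = (THE x. x \<in> simplex \<and>
      (\<forall>z\<in>simplex. (\<Sum>a\<in>UNIV. (x a - v a)^2) \<le> (\<Sum>a\<in>UNIV. (z a - v a)^2)))"

definition ip :: "('a::finite \<Rightarrow> 'b::finite \<Rightarrow> real) \<Rightarrow> ('a \<Rightarrow> real) \<Rightarrow> ('b \<Rightarrow> real) \<Rightarrow> real" where
  "ip Q x y = (\<Sum>a\<in>UNIV. \<Sum>b\<in>UNIV. x a * y b * Q a b)"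

definition lr :: "nat \<Rightarrow> nat \<Rightarrow> real" where
  "lr H k = (real H + 1) / (real H + real k)"

definition lrw :: "nat \<Rightarrow> nat \<Rightarrow> nat \<Rightarrow> real" where
  "lrw H k t = lr H t * (\<Prod>j\<in>{t+1..k}. (1 - lr H j))"

text \<open>Weighted regrets with weights w t (t = 1..k).
  Q t h s a b = Q_h^t(s,a,b), mu t h s = mu_h^t(.|s), nu t h s = nu_h^t(.|s).\<close>
definition reg_mu ::
  "(nat \<Rightarrow> real) \<Rightarrow> (nat \<Rightarrow> nat \<Rightarrow> 's \<Rightarrow> 'a::finite \<Rightarrow> 'b::finite \<Rightarrow> real)
   \<Rightarrow> (nat \<Rightarrow> nat \<Rightarrow> 's \<Rightarrow> 'a \<Rightarrow> real) \<Rightarrow> (nat \<Rightarrow> nat \<Rightarrow> 's \<Rightarrow> 'b \<Rightarrow> real)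
   \<Rightarrow> nat \<Rightarrow> nat \<Rightarrow> 's \<Rightarrow> real" where
  "reg_mu w Q mu nu k h s =
     (SUP z\<in>simplex. (\<Sum>t=1..k. w t * ip (Q t h s) z (nu t h s)))
     - (\<Sum>t=1..k. w t * ip (Q t h s) (mu t h s) (nu t h s))"

definition reg_nu ::
  "(nat \<Rightarrow> real) \<Rightarrow> (nat \<Rightarrow> nat \<Rightarrow> 's \<Rightarrow> 'a::finite \<Rightarrow> 'b::finite \<Rightarrow> real)
   \<Rightarrow> (nat \<Rightarrow> nat \<Rightarrow> 's \<Rightarrow> 'a \<Rightarrow> real) \<Rightarrow> (nat \<Rightarrow> nat \<Rightarrow> 's \<Rightarrow> 'b \<Rightarrow> real)
   \<Rightarrow> nat \<Rightarrow> nat \<Rightarrow> 's \<Rightarrow> real" where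
  "reg_nu w Q mu nu k h s =
     (\<Sum>t=1..k. w t * ip (Q t h s) (mu t h s) (nu t h s))
     - (INF z\<in>simplex. (\<Sum>t=1..k. w t * ip (Q t h s) (mu t h s) z))"

definition reg ::
  "nat \<Rightarrow> (nat \<Rightarrow> nat \<Rightarrow> 's::finite \<Rightarrow> 'a::finite \<Rightarrow> 'b::finite \<Rightarrow> real)
   \<Rightarrow> (nat \<Rightarrow> nat \<Rightarrow> 's \<Rightarrow> 'a \<Rightarrow> real) \<Rightarrow> (nat \<Rightarrow> nat \<Rightarrow> 's \<Rightarrow> 'b \<Rightarrow> real)
   \<Rightarrow> nat \<Rightarrow> nat \<Rightarrow> real" where
  "reg H Q mu nu k h = (MAX s\<in>UNIV. max (reg_mu (lrw H k) Q mu nu k h s)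
                                      (reg_nu (lrw H k) Q mu nu k h s))"

definition reg_bar ::
  "(nat \<Rightarrow> real) \<Rightarrow> (nat \<Rightarrow> nat \<Rightarrow> 's::finite \<Rightarrow> 'a::finite \<Rightarrow> 'b::finite \<Rightarrow> real)
   \<Rightarrow> (nat \<Rightarrow> nat \<Rightarrow> 's \<Rightarrow> 'a \<Rightarrow> real) \<Rightarrow> (nat \<Rightarrow> nat \<Rightarrow> 's \<Rightarrow> 'b \<Rightarrow> real)
   \<Rightarrow> nat \<Rightarrow> nat \<Rightarrow> real" where
  "reg_bar w Q mu nu k h = (MAX s\<in>UNIV. reg_mu w Q mu nu k h s + reg_nu w Q mu nu k h s)"

end

theory Submission
  imports Defs "HOL-Analysis.Function_Topology"
begin


lemma simplex_compact: "compact (simplex :: ('a::finite \<Rightarrow> real) set)"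
proof -
  have c1: "compact (PiE (UNIV::'a set) (\<lambda>_. {0..1::real}))"
    using compactin_PiE[of "\<lambda>_. euclidean" "UNIV::'a set" "\<lambda>_. {0..1::real}"]
    by (simp add: euclidean_product_topology)
  have cl: "closed (simplex :: ('a \<Rightarrow> real) set)"
  proof -
    have "simplex = (\<Inter>a. {x::'a\<Rightarrow>real. 0 \<le> x a}) \<inter> {x. (\<Sum>a\<in>UNIV. x a) = 1}"
      by (auto simp: simplex_def)
    moreover have "closed {x::'a\<Rightarrow>real. 0 \<le> x a}" for a
      by (intro closed_Collect_le continuous_intros) (auto intro: continuous_on_product_coordinates)
    moreover have "closed {x::'a\<Rightarrow>real. (\<Sum>a\<in>UNIV. x a) = 1}"
      by (intro closed_Collect_eq continuous_intros) (auto intro: continuous_on_product_coordinates)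
    ultimately show ?thesis by (metis closed_INT closed_Int)
  qed
  have sub: "simplex \<subseteq> PiE (UNIV::'a set) (\<lambda>_. {0..1::real})"
  proof
    fix x :: "'a \<Rightarrow> real" assume x: "x \<in> simplex"
    have "x a \<le> 1" for a
    proof -
      have "x a \<le> (\<Sum>b\<in>UNIV. x b)"
        using x by (intro member_le_sum) (auto simp: simplex_def)
      thus ?thesis using x by (simp add: simplex_def)
    qed
    thus "x \<in> PiE UNIV (\<lambda>_. {0..1})" using x by (auto simp: simplex_def)
  qed
  show ?thesis using compact_Int_closed[OF c1 cl] sub by (simp add: Int_absorb1)
qed

lemma simplex_ne: "(\<lambda>_. 1 / real (card (UNIV::'a::finite set))) \<in> (simplex :: ('a \<Rightarrow> real) set)"
  by (simp add: simplex_def)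

lemma simplex_conv:
  assumes "p \<in> simplex" "z \<in> simplex" "0 \<le> l" "l \<le> (1::real)"
  shows "(\<lambda>a. p a + l * (z a - p a)) \<in> (simplex :: ('a::finite \<Rightarrow> real) set)"
proof -
  have "0 \<le> p a + l * (z a - p a)" for a
  proof -
    have "p a + l * (z a - p a) = (1 - l) * p a + l * z a" by (simp add: algebra_simps)
    moreover have "0 \<le> (1 - l) * p a" "0 \<le> l * z a" using assms by (auto simp: simplex_def)
    ultimately show ?thesis by linarith
  qed
  moreover have "(\<Sum>a\<in>UNIV. p a + l * (z a - p a)) = 1"
  proof -
    have "(\<Sum>a\<in>UNIV. p a + l * (z a - p a)) = (\<Sum>a\<in>UNIV. p a) + l * ((\<Sum>a\<in>UNIV. z a) - (\<Sum>a\<in>UNIV. p a))"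
      by (simp add: sum.distrib sum_distrib_left[symmetric] sum_subtractf)
    thus ?thesis using assms by (simp add: simplex_def)
  qed
  ultimately show ?thesis by (simp add: simplex_def)
qed

lemma min_varineq:
  fixes v p :: "'a::finite \<Rightarrow> real"
  assumes p: "p \<in> simplex"
    and pmin: "\<forall>z\<in>simplex. (\<Sum>a\<in>UNIV. (p a - v a)^2) \<le> (\<Sum>a\<in>UNIV. (z a - v a)^2)"
    and z: "z \<in> simplex"
  shows "0 \<le> (\<Sum>a\<in>UNIV. (p a - v a) * (z a - p a))"
proof (rule ccontr)
  define c where "c = (\<Sum>a\<in>UNIV. (p a - v a) * (z a - p a))"
  define d where "d = (\<Sum>a\<in>UNIV. (z a - p a)^2)"
  assume "\<not> 0 \<le> (\<Sum>a\<in>UNIV. (p a - v a) * (z a - p a))"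
  hence c: "c < 0" by (simp add: c_def)
  have key: "0 \<le> 2 * l * c + l^2 * d" if l: "0 \<le> l" "l \<le> 1" for l
  proof -
    have e: "(\<Sum>a\<in>UNIV. (p a + l * (z a - p a) - v a)^2) = (\<Sum>a\<in>UNIV. (p a - v a)^2) + 2 * l * c + l^2 * d"
    proof -
      have "(\<Sum>a\<in>UNIV. (p a + l * (z a - p a) - v a)^2) =
            (\<Sum>a\<in>UNIV. (p a - v a)^2 + 2 * l * ((p a - v a) * (z a - p a)) + l^2 * (z a - p a)^2)"
        by (rule sum.cong[OF refl]) (simp add: power2_eq_square; algebra)
      also have "\<dots> = (\<Sum>a\<in>UNIV. (p a - v a)^2) + 2 * l * c + l^2 * d"
        by (simp add: sum.distrib sum_distrib_left c_def d_def)
      finally show ?thesis .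
    qed
    have "(\<Sum>a\<in>UNIV. (p a - v a)^2) \<le> (\<Sum>a\<in>UNIV. (p a + l * (z a - p a) - v a)^2)"
      using bspec[OF pmin simplex_conv[OF p z l]] by simp
    thus ?thesis using e by linarith
  qed
  have d0: "0 \<le> d" unfolding d_def by (intro sum_nonneg) auto
  show False
  proof (cases "d = 0")
    case True thus ?thesis using key[of 1] c by simp
  next
    case False
    hence dp: "d > 0" using d0 by simp
    define l where "l = min 1 (- c / d)"
    have l0: "0 \<le> l" "l \<le> 1" using c dp by (auto simp: l_def divide_nonpos_pos)
    have "l * d \<le> - c" using dp by (simp add: l_def min_def field_simps split: if_splits)
    hence "l * (l * d) \<le> l * (- c)" by (rule mult_left_mono) (use l0 in simp)
    hence "2 * l * c + l^2 * d \<le> l * c" by (simp add: power2_eq_square algebra_simps)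
    moreover have "l > 0" using c dp by (auto simp: l_def divide_neg_pos)
    hence "l * c < 0" using c by (simp add: mult_pos_neg)
    ultimately show False using key[OF l0] by linarith
  qed
qed

lemma proj_char:
  fixes v :: "'a::finite \<Rightarrow> real"
  shows "proj_simplex v \<in> simplex \<and>
    (\<forall>z\<in>simplex. (\<Sum>a\<in>UNIV. (proj_simplex v a - z a)^2) \<le> (\<Sum>a\<in>UNIV. (v a - z a)^2))"
proof -
  define f where "f = (\<lambda>x::'a\<Rightarrow>real. \<Sum>a\<in>UNIV. (x a - v a)^2)"
  have cont: "continuous_on simplex f"
    unfolding f_def by (intro continuous_intros continuous_on_subset[OF continuous_on_product_coordinates subset_UNIV])
  obtain p where p: "p \<in> simplex" and pmin: "\<forall>z\<in>simplex. f p \<le> f z"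
    using continuous_attains_inf[OF simplex_compact _ cont] simplex_ne by blast
  have pmin': "\<forall>z\<in>simplex. (\<Sum>a\<in>UNIV. (p a - v a)^2) \<le> (\<Sum>a\<in>UNIV. (z a - v a)^2)"
    using pmin by (simp add: f_def)
  have uniq: "q = p" if q: "q \<in> simplex" and qmin: "\<forall>z\<in>simplex. (\<Sum>a\<in>UNIV. (q a - v a)^2) \<le> (\<Sum>a\<in>UNIV. (z a - v a)^2)" for q
  proof -
    have 1: "0 \<le> (\<Sum>a\<in>UNIV. (p a - v a) * (q a - p a))" by (rule min_varineq[OF p pmin' q])
    have 2: "0 \<le> (\<Sum>a\<in>UNIV. (q a - v a) * (p a - q a))" by (rule min_varineq[OF q qmin p])
    have "(\<Sum>a\<in>UNIV. (p a - v a) * (q a - p a)) + (\<Sum>a\<in>UNIV. (q a - v a) * (p a - q a))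
          = - (\<Sum>a\<in>UNIV. (q a - p a)^2)"
    proof -
      have "(\<Sum>a\<in>UNIV. (p a - v a) * (q a - p a)) + (\<Sum>a\<in>UNIV. (q a - v a) * (p a - q a))
          = (\<Sum>a\<in>UNIV. (p a - v a) * (q a - p a) + (q a - v a) * (p a - q a))"
        by (simp add: sum.distrib)
      also have "\<dots> = (\<Sum>a\<in>UNIV. - ((q a - p a)^2))"
        by (rule sum.cong[OF refl]) (simp add: power2_eq_square; algebra)
      also have "\<dots> = - (\<Sum>a\<in>UNIV. (q a - p a)^2)" by (simp add: sum_negf)
      finally show ?thesis .
    qed
    moreover have "0 \<le> (\<Sum>a\<in>UNIV. (q a - p a)^2)" by (intro sum_nonneg) auto
    ultimately have s0: "(\<Sum>a\<in>UNIV. (q a - p a)^2) = 0"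
      using 1 2 by linarith
    have "\<forall>a\<in>UNIV. (q a - p a)^2 = 0"
      using sum_nonneg_eq_0_iff[of UNIV "\<lambda>a. (q a - p a)^2"] s0 by simp
    thus ?thesis by auto
  qed
  have "proj_simplex v = p"
    unfolding proj_simplex_def
    by (rule the_equality) (use p pmin' in blast, use uniq in blast)
  moreover have "\<forall>z\<in>simplex. (\<Sum>a\<in>UNIV. (p a - z a)^2) \<le> (\<Sum>a\<in>UNIV. (v a - z a)^2)"
  proof
    fix z :: "'a \<Rightarrow> real" assume z: "z \<in> simplex"
    have vi: "0 \<le> (\<Sum>a\<in>UNIV. (p a - v a) * (z a - p a))" by (rule min_varineq[OF p pmin' z])
    have "(\<Sum>a\<in>UNIV. (v a - z a)^2) = (\<Sum>a\<in>UNIV. (v a - p a)^2) + 2 * (\<Sum>a\<in>UNIV. (p a - v a) * (z a - p a)) + (\<Sum>a\<in>UNIV. (p a - z a)^2)"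
    proof -
      have "(\<Sum>a\<in>UNIV. (v a - z a)^2) = (\<Sum>a\<in>UNIV. (v a - p a)^2 + 2 * ((p a - v a) * (z a - p a)) + (p a - z a)^2)"
        by (rule sum.cong[OF refl]) (simp add: power2_eq_square; algebra)
      thus ?thesis by (simp add: sum.distrib sum_distrib_left)
    qed
    moreover have "0 \<le> (\<Sum>a\<in>UNIV. (v a - p a)^2)" by (intro sum_nonneg) auto
    ultimately show "(\<Sum>a\<in>UNIV. (p a - z a)^2) \<le> (\<Sum>a\<in>UNIV. (v a - z a)^2)" using vi by linarith
  qed
  ultimately show ?thesis using p by simp
qed



lemma simplex_le1: "x \<in> simplex \<Longrightarrow> x a \<le> (1::real)"
proof -
  assume x: "x \<in> simplex"
  have "x a \<le> (\<Sum>b\<in>UNIV. x b)"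
    using x by (intro member_le_sum) (auto simp: simplex_def)
  thus ?thesis using x by (simp add: simplex_def)
qed

lemma simplex_dist2:
  assumes "x \<in> simplex" "z \<in> simplex"
  shows "(\<Sum>a\<in>UNIV. (x a - z a)^2) \<le> (2::real)"
proof -
  have "(\<Sum>a\<in>UNIV. (x a - z a)^2) \<le> (\<Sum>a\<in>UNIV. x a + z a)"
  proof (rule sum_mono)
    fix a
    have h: "0 \<le> x a" "x a \<le> 1" "0 \<le> z a" "z a \<le> 1"
      using assms simplex_le1[of x a] simplex_le1[of z a] by (auto simp: simplex_def)
    hence "x a * x a \<le> x a" "z a * z a \<le> z a" "0 \<le> x a * z a"
      by (auto simp: mult_left_le)
    thus "(x a - z a)^2 \<le> x a + z a" by (simp add: power2_eq_square algebra_simps)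
  qed
  also have "\<dots> = 2" using assms by (simp add: sum.distrib simplex_def)
  finally show ?thesis .
qed

lemma simplex_avg:
  fixes y :: "'a::finite \<Rightarrow> real"
  assumes y: "y \<in> simplex" and f: "\<And>b. lo \<le> f b \<and> f b \<le> hi"
  shows "lo \<le> (\<Sum>b\<in>UNIV. y b * f b) \<and> (\<Sum>b\<in>UNIV. y b * f b) \<le> hi"
proof -
  have y0: "\<And>b. 0 \<le> y b" and y1: "(\<Sum>b\<in>UNIV. y b) = 1" using y by (auto simp: simplex_def)
  have "(\<Sum>b\<in>UNIV. y b * lo) \<le> (\<Sum>b\<in>UNIV. y b * f b)"
    by (rule sum_mono) (use y0 f in \<open>simp add: mult_left_mono\<close>)
  moreover have "(\<Sum>b\<in>UNIV. y b * f b) \<le> (\<Sum>b\<in>UNIV. y b * hi)"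
    by (rule sum_mono) (use y0 f in \<open>simp add: mult_left_mono\<close>)
  moreover have "(\<Sum>b\<in>UNIV. y b * lo) = lo" "(\<Sum>b\<in>UNIV. y b * hi) = hi"
    using y1 by (simp_all add: sum_distrib_right[symmetric])
  ultimately show ?thesis by simp
qed

lemma ip_alt: "ip Q x y = (\<Sum>a\<in>UNIV. x a * (\<Sum>b\<in>UNIV. y b * Q a b))"
  unfolding ip_def by (simp add: sum_distrib_left mult.assoc mult.left_commute)

lemma ip_alt2: "ip Q x y = (\<Sum>b\<in>UNIV. y b * (\<Sum>a\<in>UNIV. x a * Q a b))"
  unfolding ip_def by (subst sum.swap) (simp add: sum_distrib_left mult.assoc mult.left_commute)

lemma ip_bounds:
  assumes "x \<in> simplex" "y \<in> simplex" "\<And>a b. lo \<le> Q a b \<and> Q a b \<le> hi"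
  shows "lo \<le> ip Q x y \<and> ip Q x y \<le> hi"
  unfolding ip_alt
  by (rule simplex_avg[OF assms(1)]) (rule simplex_avg[OF assms(2)], use assms(3) in auto)

lemma ip_diff_left:
  "ip Q z y - ip Q x y = (\<Sum>a\<in>UNIV. (\<Sum>b\<in>UNIV. y b * Q a b) * (z a - x a))"
  unfolding ip_alt by (simp add: sum_subtractf[symmetric] algebra_simps)

lemma ip_diff_right:
  "ip Q x y - ip Q x z = (\<Sum>b\<in>UNIV. (- (\<Sum>a\<in>UNIV. x a * Q a b)) * (z b - y b))"
  unfolding ip_alt2 by (simp add: sum_subtractf[symmetric] algebra_simps)

lemma tele:
  fixes w D :: "nat \<Rightarrow> real"
  assumes "1 \<le> k" "\<forall>t\<in>{1..k}. 0 \<le> w t" "\<forall>t. 1 \<le> t \<longrightarrow> t < k \<longrightarrow> w t \<le> w (Suc t)"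
    "\<forall>t\<in>{1..Suc k}. 0 \<le> D t \<and> D t \<le> M"
  shows "(\<Sum>t=1..k. w t * (D t - D (Suc t))) \<le> w k * M - w k * D (Suc k)"
  using assms
proof (induction k rule: dec_induct)
  case base
  have "D 1 \<le> M" "0 \<le> w 1" using assms by auto
  hence "w 1 * D 1 \<le> w 1 * M" by (simp add: mult_left_mono)
  then show ?case by (simp add: algebra_simps)
next
  case (step n)
  have IH: "(\<Sum>t=1..n. w t * (D t - D (Suc t))) \<le> w n * M - w n * D (Suc n)"
    using step by auto
  have wn: "w n \<le> w (Suc n)" "0 \<le> w n" using step by auto
  have D: "D (Suc n) \<le> M" "0 \<le> D (Suc n)" using step by auto
  have "(\<Sum>t=1..Suc n. w t * (D t - D (Suc t))) = (\<Sum>t=1..n. w t * (D t - D (Suc t))) + w (Suc n) * (D (Suc n) - D (Suc (Suc n)))"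
    using step by (simp add: sum.nat_ivl_Suc')
  also have "\<dots> \<le> w n * M - w n * D (Suc n) + w (Suc n) * (D (Suc n) - D (Suc (Suc n)))"
    using IH by linarith
  also have "\<dots> \<le> w (Suc n) * M - w (Suc n) * D (Suc (Suc n))"
  proof -
    have "(w (Suc n) - w n) * D (Suc n) \<le> (w (Suc n) - w n) * M"
      using wn D by (intro mult_left_mono) auto
    thus ?thesis by (simp add: algebra_simps)
  qed
  finally show ?case .
qed



lemma ogd:
  fixes x g :: "nat \<Rightarrow> 'c::finite \<Rightarrow> real" and w :: "nat \<Rightarrow> real"
  assumes eta: "\<eta> > 0" and k: "1 \<le> k"
    and x1: "x 1 \<in> simplex"
    and step: "\<forall>t\<in>{1..k}. x (Suc t) = proj_simplex (\<lambda>a. x t a + \<eta> * g t a)"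
    and gb: "\<forall>t\<in>{1..k}. (\<Sum>a\<in>UNIV. (g t a)^2) \<le> G"
    and w0: "\<forall>t\<in>{1..k}. 0 \<le> w t" and wm: "\<forall>t. 1 \<le> t \<longrightarrow> t < k \<longrightarrow> w t \<le> w (Suc t)"
    and z: "z \<in> simplex"
  shows "(\<Sum>t=1..k. w t * (\<Sum>a\<in>UNIV. g t a * (z a - x t a))) \<le> w k / \<eta> + \<eta> * G / 2 * (\<Sum>t=1..k. w t)"
proof -
  have xs: "x t \<in> simplex" if "t \<in> {1..Suc k}" for t
  proof (cases "t = 1")
    case True thus ?thesis using x1 by simp
  next
    case False
    define t' where "t' = t - 1"
    have t': "t = Suc t'" "t' \<in> {1..k}" using that False by (auto simp: t'_def)
    thus ?thesis using step proj_char by auto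
  qed
  define D where "D t = (\<Sum>a\<in>UNIV. (x t a - z a)^2)" for t
  have Db: "\<forall>t\<in>{1..Suc k}. 0 \<le> D t \<and> D t \<le> 2"
    using xs simplex_dist2[OF _ z] unfolding D_def by (auto intro: sum_nonneg)
  have per: "(\<Sum>a\<in>UNIV. g t a * (z a - x t a)) \<le> (D t - D (Suc t)) / (2 * \<eta>) + \<eta> / 2 * G"
    if t: "t \<in> {1..k}" for t
  proof -
    define S where "S = (\<Sum>a\<in>UNIV. g t a * (z a - x t a))"
    define N where "N = (\<Sum>a\<in>UNIV. (g t a)^2)"
    have "D (Suc t) \<le> (\<Sum>a\<in>UNIV. (x t a + \<eta> * g t a - z a)^2)"
      using step t proj_char[of "\<lambda>a. x t a + \<eta> * g t a"] z unfolding D_def by auto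
    also have "\<dots> = (\<Sum>a\<in>UNIV. (x t a - z a)^2 + (- 2 * \<eta>) * (g t a * (z a - x t a)) + \<eta>^2 * (g t a)^2)"
      by (rule sum.cong[OF refl]) (simp add: power2_eq_square; algebra)
    also have "\<dots> = D t - 2 * \<eta> * S + \<eta>^2 * N"
      by (simp add: sum.distrib sum_subtractf sum_distrib_left D_def S_def N_def)
    finally have "2 * \<eta> * S \<le> D t - D (Suc t) + \<eta>^2 * N" by linarith
    moreover have "N \<le> G" using gb t by (simp add: N_def)
    hence "\<eta>^2 * N \<le> \<eta>^2 * G" by (simp add: mult_left_mono)
    ultimately have "2 * \<eta> * S \<le> D t - D (Suc t) + \<eta>^2 * G" by linarith
    hence "S \<le> (D t - D (Suc t) + \<eta>^2 * G) / (2 * \<eta>)" using eta by (simp add: field_simps)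
    also have "\<dots> = (D t - D (Suc t)) / (2 * \<eta>) + \<eta> / 2 * G"
      using eta by (simp add: field_simps power2_eq_square)
    finally show ?thesis by (simp add: S_def)
  qed
  have "(\<Sum>t=1..k. w t * (\<Sum>a\<in>UNIV. g t a * (z a - x t a)))
        \<le> (\<Sum>t=1..k. w t * ((D t - D (Suc t)) / (2 * \<eta>) + \<eta> / 2 * G))"
    by (rule sum_mono) (use per w0 in \<open>simp add: mult_left_mono\<close>)
  also have "\<dots> = (\<Sum>t=1..k. w t * (D t - D (Suc t))) / (2 * \<eta>) + \<eta> * G / 2 * (\<Sum>t=1..k. w t)"
    by (simp add: distrib_left sum.distrib sum_divide_distrib sum_distrib_left sum_distrib_right algebra_simps)
  also have "\<dots> \<le> (w k * 2) / (2 * \<eta>) + \<eta> * G / 2 * (\<Sum>t=1..k. w t)"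
  proof -
    have "(\<Sum>t=1..k. w t * (D t - D (Suc t))) \<le> w k * 2 - w k * D (Suc k)"
      by (rule tele[OF k w0 wm Db])
    moreover have "0 \<le> w k * D (Suc k)" using w0 Db k by auto
    ultimately have "(\<Sum>t=1..k. w t * (D t - D (Suc t))) \<le> w k * 2" by linarith
    hence "(\<Sum>t=1..k. w t * (D t - D (Suc t))) / (2 * \<eta>) \<le> (w k * 2) / (2 * \<eta>)"
      by (rule divide_right_mono) (use eta in auto)
    thus ?thesis by linarith
  qed
  also have "(w k * 2) / (2 * \<eta>) = w k / \<eta>" by simp
  finally show ?thesis .
qed

lemma lr_pos: "1 \<le> H \<Longrightarrow> 0 < lr H k" by (simp add: lr_def)
lemma lr_le1: "1 \<le> k \<Longrightarrow> lr H k \<le> 1" by (simp add: lr_def)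

lemma lrw_nonneg: "1 \<le> H \<Longrightarrow> 0 \<le> lrw H k t"
  unfolding lrw_def
  by (intro mult_nonneg_nonneg prod_nonneg) (auto simp: lr_pos less_imp_le lr_le1)

lemma lrw_last: "lrw H k k = lr H k" by (simp add: lrw_def)

lemma lrw_mono:
  assumes H: "1 \<le> H" and t: "1 \<le> t" "t < k"
  shows "lrw H k t \<le> lrw H k (Suc t)"
proof -
  have split: "(\<Prod>j\<in>{t+1..k}. (1 - lr H j)) = (1 - lr H (Suc t)) * (\<Prod>j\<in>{Suc (Suc t)..k}. (1 - lr H j))"
    using t by (simp add: prod.atLeast_Suc_atMost)
  have ineq: "lr H t * (1 - lr H (Suc t)) \<le> lr H (Suc t)"
  proof -
    have p: "0 < real H + real t" "0 < real H + real t + 1" using H by auto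
    have "lr H t * (1 - lr H (Suc t)) = (real H + 1) * real t / ((real H + real t) * (real H + real t + 1))"
      using p by (simp add: lr_def field_simps)
    also have "\<dots> = (real H + 1) / (real H + real t + 1) * (real t / (real H + real t))"
      by (simp add: field_simps)
    also have "\<dots> \<le> (real H + 1) / (real H + real t + 1) * 1"
      by (intro mult_left_mono) (use p in auto)
    also have "\<dots> = (real H + 1) / (real H + real t + 1)" by simp
    also have "\<dots> = lr H (Suc t)" by (simp add: lr_def)
    finally show ?thesis .
  qed
  have P0: "0 \<le> (\<Prod>j\<in>{Suc (Suc t)..k}. (1 - lr H j))"
    by (intro prod_nonneg) (auto simp: lr_le1)
  show ?thesis unfolding lrw_def split using mult_right_mono[OF ineq P0]
    by (simp add: mult.assoc)
qed

lemma lrw_sum: assumes "1 \<le> H" "1 \<le> k" shows "(\<Sum>t=1..k. lrw H k t) = 1"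
  using assms(2)
proof (induction k rule: dec_induct)
  case base
  then show ?case by (simp add: lrw_def lr_def)
next
  case (step n)
  have "(\<Sum>t=1..n. lrw H (Suc n) t) = (\<Sum>t=1..n. lrw H n t * (1 - lr H (Suc n)))"
  proof (rule sum.cong[OF refl])
    fix t assume "t \<in> {1..n}"
    hence "Suc t \<le> Suc n" by auto
    thus "lrw H (Suc n) t = lrw H n t * (1 - lr H (Suc n))"
      unfolding lrw_def by (simp add: prod.nat_ivl_Suc' mult_ac)
  qed
  also have "\<dots> = 1 - lr H (Suc n)" using step by (simp add: sum_distrib_right[symmetric])
  finally show ?case using step by (simp add: sum.nat_ivl_Suc' lrw_last)
qed



theorem mainTheorem10:
  fixes H :: nat and \<eta> :: real
    and r :: "nat \<Rightarrow> 's::finite \<Rightarrow> 'a::finite \<Rightarrow> 'b::finite \<Rightarrow> real"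
    and P :: "nat \<Rightarrow> 's \<Rightarrow> 'a \<Rightarrow> 'b \<Rightarrow> 's \<Rightarrow> real"
    and Q :: "nat \<Rightarrow> nat \<Rightarrow> 's \<Rightarrow> 'a \<Rightarrow> 'b \<Rightarrow> real"
    and mu :: "nat \<Rightarrow> nat \<Rightarrow> 's \<Rightarrow> 'a \<Rightarrow> real"
    and nu :: "nat \<Rightarrow> nat \<Rightarrow> 's \<Rightarrow> 'b \<Rightarrow> real"
  assumes H: "H \<ge> 1"
    and eta: "\<eta> > 0"
    and r_range: "\<And>h s a b. h \<in> {1..H} \<Longrightarrow> 0 \<le> r h s a b \<and> r h s a b \<le> 1"
    and P_nonneg: "\<And>h s a b s'. h \<in> {1..H} \<Longrightarrow> 0 \<le> P h s a b s'"
    and P_sum: "\<And>h s a b. h \<in> {1..H} \<Longrightarrow> (\<Sum>s'\<in>UNIV. P h s a b s') = 1"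
    and Q_last: "\<And>k s a b. Q k (H+1) s a b = 0"
    and Q_init: "\<And>h s a b. h \<in> {1..H} \<Longrightarrow> Q 0 h s a b = real H - real h + 1"
    and Q_step: "\<And>k h s a b. k \<ge> 1 \<Longrightarrow> h \<in> {1..H} \<Longrightarrow>
        Q k h s a b = (1 - lr H k) * Q (k-1) h s a b
          + lr H k * (r h s a b + (\<Sum>s'\<in>UNIV. P h s a b s' *
                 ip (Q k (h+1) s') (mu k (h+1) s') (nu k (h+1) s')))"
    and mu_init: "\<And>h s a. h \<in> {1..H} \<Longrightarrow> mu 0 h s a = 1 / real (card (UNIV :: 'a set))"
    and nu_init: "\<And>h s b. h \<in> {1..H} \<Longrightarrow> nu 0 h s b = 1 / real (card (UNIV :: 'b set))"
    and mu_step: "\<And>k h s. k \<ge> 1 \<Longrightarrow> h \<in> {1..H} \<Longrightarrow>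
        mu k h s = proj_simplex (\<lambda>a. mu (k-1) h s a
                     + \<eta> * (\<Sum>b\<in>UNIV. nu (k-1) h s b * Q (k-1) h s a b))"
    and nu_step: "\<And>k h s. k \<ge> 1 \<Longrightarrow> h \<in> {1..H} \<Longrightarrow>
        nu k h s = proj_simplex (\<lambda>b. nu (k-1) h s b
                     - \<eta> * (\<Sum>a\<in>UNIV. mu (k-1) h s a * Q (k-1) h s a b))"
  shows "\<forall>k\<ge>1. \<forall>h\<in>{1..H}.
     reg H Q mu nu k h \<le> 2 / \<eta> * ((real H + 1) / (real H + real k))
        + \<eta> * real (max (card (UNIV :: 'a set)) (card (UNIV :: 'b set))) * (real H)^2 / 2
   \<and> reg_bar (\<lambda>t. 1 / real k) Q mu nu k h \<le> 4 / (\<eta> * real k)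
        + \<eta> * (real (card (UNIV :: 'a set)) + real (card (UNIV :: 'b set))) * (real H)^2 / 2"
proof -
  have QL: "Q k (Suc H) s a b = 0" for k s a b using Q_last[of k s a b] by simp
  have mus: "mu k h s \<in> simplex" if h: "h \<in> {1..H}" for k h s
  proof (cases "k = 0")
    case True
    have "mu k h s = (\<lambda>_. 1 / real (card (UNIV :: 'a set)))"
      using True mu_init[OF h] by (intro ext) simp
    thus ?thesis using simplex_ne by simp
  next
    case False thus ?thesis using mu_step[of k h s] h by (simp add: proj_char[THEN conjunct1])
  qed
  have nus: "nu k h s \<in> simplex" if h: "h \<in> {1..H}" for k h s
  proof (cases "k = 0")
    case True
    have "nu k h s = (\<lambda>_. 1 / real (card (UNIV :: 'b set)))"
      using True nu_init[OF h] by (intro ext) simp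
    thus ?thesis using simplex_ne by simp
  next
    case False thus ?thesis using nu_step[of k h s] h by (simp add: proj_char[THEN conjunct1])
  qed
  have Ps: "P h s a b \<in> simplex" if h: "h \<in> {1..H}" for h s a b
    using P_nonneg[OF h] P_sum[OF h] by (simp add: simplex_def)
  have conv: "lo \<le> (1 - l) * u + l * v \<and> (1 - l) * u + l * v \<le> hi"
    if "0 \<le> l" "l \<le> 1" "lo \<le> u" "u \<le> hi" "lo \<le> v" "v \<le> hi" for l u v lo hi :: real
  proof -
    have "(1 - l) * lo \<le> (1 - l) * u" "(1 - l) * u \<le> (1 - l) * hi" "l * lo \<le> l * v" "l * v \<le> l * hi"
      using that by (auto intro: mult_left_mono)
    thus ?thesis by (simp add: algebra_simps)
  qed
  have Qb: "\<forall>h s a b. h \<in> {1..H+1} \<longrightarrow> 0 \<le> Q k h s a b \<and> Q k h s a b \<le> real H - real h + 1" for k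
  proof (induction k)
    case 0
    show ?case
    proof (intro allI impI)
      fix h s a b assume h: "h \<in> {1..H+1}"
      show "0 \<le> Q 0 h s a b \<and> Q 0 h s a b \<le> real H - real h + 1"
      proof (cases "h = H+1")
        case True thus ?thesis using Q_last by simp
      next
        case False
        hence "h \<in> {1..H}" using h by auto
        thus ?thesis using Q_init by auto
      qed
    qed
  next
    case (Suc k)
    note IHk = Suc.IH
    have main: "\<forall>s a b. 0 \<le> Q (Suc k) (H+1-n) s a b \<and> Q (Suc k) (H+1-n) s a b \<le> real H - real (H+1-n) + 1"
      if "n \<le> H" for n
      using that
    proof (induction n)
      case 0 thus ?case using Q_last by simp
    next
      case (Suc n)
      define h where "h = H - n"
      have h: "h \<in> {1..H}" "H + 1 - Suc n = h" "H + 1 - n = h + 1" using Suc.prems by (auto simp: h_def)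
      have IH: "\<forall>s a b. 0 \<le> Q (Suc k) (h+1) s a b \<and> Q (Suc k) (h+1) s a b \<le> real H - real h"
        using Suc.IH Suc.prems h by auto
      have ipb: "0 \<le> ip (Q (Suc k) (h+1) s') (mu (Suc k) (h+1) s') (nu (Suc k) (h+1) s')
               \<and> ip (Q (Suc k) (h+1) s') (mu (Suc k) (h+1) s') (nu (Suc k) (h+1) s') \<le> real H - real h" for s'
      proof (cases "h + 1 \<le> H")
        case True
        hence hh: "h + 1 \<in> {1..H}" by auto
        show ?thesis by (rule ip_bounds[OF mus[OF hh] nus[OF hh]]) (use IH in auto)
      next
        case False
        hence "h + 1 = H + 1" using h by auto
        thus ?thesis using h by (simp add: ip_def QL)
      qed
      show ?case
      proof (intro allI)
        fix s a b
        have sb: "0 \<le> (\<Sum>s'\<in>UNIV. P h s a b s' * ip (Q (Suc k) (h+1) s') (mu (Suc k) (h+1) s') (nu (Suc k) (h+1) s'))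
          \<and> (\<Sum>s'\<in>UNIV. P h s a b s' * ip (Q (Suc k) (h+1) s') (mu (Suc k) (h+1) s') (nu (Suc k) (h+1) s')) \<le> real H - real h"
          by (rule simplex_avg[OF Ps[OF h(1)]]) (use ipb in auto)
        have rb: "0 \<le> r h s a b" "r h s a b \<le> 1" using r_range[OF h(1)] by auto
        have Qk: "0 \<le> Q k h s a b" "Q k h s a b \<le> real H - real h + 1" using IHk h(1) by auto
        have l: "0 \<le> lr H (Suc k)" "lr H (Suc k) \<le> 1" using lr_pos[OF H, of "Suc k"] lr_le1[of "Suc k" H] by auto
        have eq: "Q (Suc k) h s a b = (1 - lr H (Suc k)) * Q k h s a b
          + lr H (Suc k) * (r h s a b + (\<Sum>s'\<in>UNIV. P h s a b s' *
                 ip (Q (Suc k) (h+1) s') (mu (Suc k) (h+1) s') (nu (Suc k) (h+1) s')))"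
          using Q_step[of "Suc k" h s a b] h(1) by simp
        have "0 \<le> Q (Suc k) h s a b \<and> Q (Suc k) h s a b \<le> real H - real h + 1"
          unfolding eq by (rule conv[OF l Qk]) (use sb rb in auto)
        thus "0 \<le> Q (Suc k) (H + 1 - Suc n) s a b \<and> Q (Suc k) (H + 1 - Suc n) s a b \<le> real H - real (H + 1 - Suc n) + 1"
          using h by simp
      qed
    qed
    show ?case
    proof (intro allI impI)
      fix h s a b assume h: "h \<in> {1..H+1}"
      define n where "n = H + 1 - h"
      have "n \<le> H" "H + 1 - n = h" using h by (auto simp: n_def)
      thus "0 \<le> Q (Suc k) h s a b \<and> Q (Suc k) h s a b \<le> real H - real h + 1"
        using main[of n] by auto
    qed
  qed
  have Qbnd: "0 \<le> Q k h s a b \<and> Q k h s a b \<le> real H" if "h \<in> {1..H}" for k h s a b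
  proof -
    have "h \<in> {1..H+1}" using that by auto
    hence "0 \<le> Q k h s a b \<and> Q k h s a b \<le> real H - real h + 1" using Qb[of k] by blast
    moreover have "real H - real h + 1 \<le> real H" using that by auto
    ultimately show ?thesis by linarith
  qed
  have sne: "(simplex :: ('a \<Rightarrow> real) set) \<noteq> {}" "(simplex :: ('b \<Rightarrow> real) set) \<noteq> {}"
    using simplex_ne by blast+
  have RM: "reg_mu w Q mu nu k h s \<le> w k / \<eta> + \<eta> * (real (card (UNIV :: 'a set)) * (real H)^2) / 2"
    if h: "h \<in> {1..H}" and k: "1 \<le> k" and w0: "\<forall>t\<in>{1..k}. 0 \<le> w t"
      and wm: "\<forall>t. 1 \<le> t \<longrightarrow> t < k \<longrightarrow> w t \<le> w (Suc t)" and w1: "(\<Sum>t=1..k. w t) = 1"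
    for w k h s
  proof -
    define g where "g t a = (\<Sum>b\<in>UNIV. nu t h s b * Q t h s a b)" for t a
    define G where "G = real (card (UNIV :: 'a set)) * (real H)^2"
    have stp: "\<forall>t\<in>{1..k}. mu (Suc t) h s = proj_simplex (\<lambda>a. mu t h s a + \<eta> * g t a)"
      using mu_step h by (simp add: g_def)
    have gb: "\<forall>t\<in>{1..k}. (\<Sum>a\<in>UNIV. (g t a)^2) \<le> G"
    proof
      fix t assume t: "t \<in> {1..k}"
      have "(g t a)^2 \<le> (real H)^2" for a
      proof -
        have "0 \<le> g t a \<and> g t a \<le> real H"
          unfolding g_def by (rule simplex_avg[OF nus[OF h]]) (use Qbnd[OF h] in auto)
        thus ?thesis by (intro power_mono) auto
      qed
      hence "(\<Sum>a\<in>UNIV. (g t a)^2) \<le> real (card (UNIV :: 'a set)) * (real H)^2"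
        by (intro sum_bounded_above) auto
      thus "(\<Sum>a\<in>UNIV. (g t a)^2) \<le> G" by (simp add: G_def)
    qed
    have og: "(\<Sum>t=1..k. w t * (\<Sum>a\<in>UNIV. g t a * (z a - mu t h s a))) \<le> w k / \<eta> + \<eta> * G / 2"
      if z: "z \<in> simplex" for z
      using ogd[OF eta k mus[OF h] stp gb w0 wm z] w1 by simp
    have "(SUP z\<in>simplex. (\<Sum>t=1..k. w t * ip (Q t h s) z (nu t h s)))
        \<le> w k / \<eta> + \<eta> * G / 2 + (\<Sum>t=1..k. w t * ip (Q t h s) (mu t h s) (nu t h s))"
    proof (rule cSUP_least[OF sne(1)])
      fix z :: "'a \<Rightarrow> real" assume z: "z \<in> simplex"
      have "(\<Sum>t=1..k. w t * ip (Q t h s) z (nu t h s)) - (\<Sum>t=1..k. w t * ip (Q t h s) (mu t h s) (nu t h s))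
          = (\<Sum>t=1..k. w t * (\<Sum>a\<in>UNIV. g t a * (z a - mu t h s a)))"
        by (simp add: sum_subtractf[symmetric] right_diff_distrib[symmetric] ip_diff_left g_def)
      thus "(\<Sum>t=1..k. w t * ip (Q t h s) z (nu t h s))
        \<le> w k / \<eta> + \<eta> * G / 2 + (\<Sum>t=1..k. w t * ip (Q t h s) (mu t h s) (nu t h s))"
        using og[OF z] by linarith
    qed
    thus ?thesis unfolding reg_mu_def G_def by linarith
  qed
  have RN: "reg_nu w Q mu nu k h s \<le> w k / \<eta> + \<eta> * (real (card (UNIV :: 'b set)) * (real H)^2) / 2"
    if h: "h \<in> {1..H}" and k: "1 \<le> k" and w0: "\<forall>t\<in>{1..k}. 0 \<le> w t"
      and wm: "\<forall>t. 1 \<le> t \<longrightarrow> t < k \<longrightarrow> w t \<le> w (Suc t)" and w1: "(\<Sum>t=1..k. w t) = 1"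
    for w k h s
  proof -
    define g where "g t b = - (\<Sum>a\<in>UNIV. mu t h s a * Q t h s a b)" for t b
    define G where "G = real (card (UNIV :: 'b set)) * (real H)^2"
    have stp: "\<forall>t\<in>{1..k}. nu (Suc t) h s = proj_simplex (\<lambda>b. nu t h s b + \<eta> * g t b)"
      using nu_step h by (simp add: g_def)
    have gb: "\<forall>t\<in>{1..k}. (\<Sum>b\<in>UNIV. (g t b)^2) \<le> G"
    proof
      fix t assume t: "t \<in> {1..k}"
      have "(g t b)^2 \<le> (real H)^2" for b
      proof -
        have "0 \<le> (\<Sum>a\<in>UNIV. mu t h s a * Q t h s a b) \<and> (\<Sum>a\<in>UNIV. mu t h s a * Q t h s a b) \<le> real H"
          by (rule simplex_avg[OF mus[OF h]]) (use Qbnd[OF h] in auto)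
        thus ?thesis unfolding g_def by (simp add: power_mono)
      qed
      hence "(\<Sum>b\<in>UNIV. (g t b)^2) \<le> real (card (UNIV :: 'b set)) * (real H)^2"
        by (intro sum_bounded_above) auto
      thus "(\<Sum>b\<in>UNIV. (g t b)^2) \<le> G" by (simp add: G_def)
    qed
    have og: "(\<Sum>t=1..k. w t * (\<Sum>b\<in>UNIV. g t b * (z b - nu t h s b))) \<le> w k / \<eta> + \<eta> * G / 2"
      if z: "z \<in> simplex" for z
      using ogd[OF eta k nus[OF h] stp gb w0 wm z] w1 by simp
    have "(\<Sum>t=1..k. w t * ip (Q t h s) (mu t h s) (nu t h s)) - (w k / \<eta> + \<eta> * G / 2)
        \<le> (INF z\<in>simplex. (\<Sum>t=1..k. w t * ip (Q t h s) (mu t h s) z))"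
    proof (rule cINF_greatest[OF sne(2)])
      fix z :: "'b \<Rightarrow> real" assume z: "z \<in> simplex"
      have "(\<Sum>t=1..k. w t * ip (Q t h s) (mu t h s) (nu t h s)) - (\<Sum>t=1..k. w t * ip (Q t h s) (mu t h s) z)
          = (\<Sum>t=1..k. w t * (\<Sum>b\<in>UNIV. g t b * (z b - nu t h s b)))"
        by (simp only: sum_subtractf[symmetric] right_diff_distrib[symmetric] ip_diff_right g_def)
      thus "(\<Sum>t=1..k. w t * ip (Q t h s) (mu t h s) (nu t h s)) - (w k / \<eta> + \<eta> * G / 2)
        \<le> (\<Sum>t=1..k. w t * ip (Q t h s) (mu t h s) z)"
        using og[OF z] by linarith
    qed
    thus ?thesis unfolding reg_nu_def G_def by linarith
  qed
  show ?thesis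
  proof (intro allI impI ballI conjI)
    fix k :: nat and h :: nat assume k: "1 \<le> k" and h: "h \<in> {1..H}"
    define A where "A = real (card (UNIV :: 'a set))"
    define B where "B = real (card (UNIV :: 'b set))"
    define M where "M = real (max (card (UNIV :: 'a set)) (card (UNIV :: 'b set)))"
    have AM: "A \<le> M" "B \<le> M" by (auto simp: A_def B_def M_def)
    have e0: "0 \<le> \<eta> * (real H)^2 / 2" using eta by simp
    have lw0: "\<forall>t\<in>{1..k}. 0 \<le> lrw H k t" using lrw_nonneg[OF H] by auto
    have lwm: "\<forall>t. 1 \<le> t \<longrightarrow> t < k \<longrightarrow> lrw H k t \<le> lrw H k (Suc t)" using lrw_mono[OF H] by auto
    have lw1: "(\<Sum>t=1..k. lrw H k t) = 1" by (rule lrw_sum[OF H k])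
    have lrk: "lrw H k k = (real H + 1) / (real H + real k)" by (simp add: lrw_last lr_def)
    have lr0: "0 \<le> (real H + 1) / (real H + real k)" by simp
    have bnd1: "w / \<eta> + \<eta> * (X * (real H)^2) / 2 \<le> 2 / \<eta> * w + \<eta> * M * (real H)^2 / 2"
      if "0 \<le> w" "X \<le> M" for w X
    proof -
      have "w / \<eta> \<le> 2 / \<eta> * w" using that eta by (simp add: field_simps)
      moreover have "\<eta> * (X * (real H)^2) / 2 \<le> \<eta> * M * (real H)^2 / 2"
        using that eta by (simp add: mult_right_mono mult_left_mono)
      ultimately show ?thesis by linarith
    qed
    have "\<forall>s. max (reg_mu (lrw H k) Q mu nu k h s) (reg_nu (lrw H k) Q mu nu k h s)
           \<le> 2 / \<eta> * ((real H + 1) / (real H + real k)) + \<eta> * M * (real H)^2 / 2"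
    proof
      fix s
      have "reg_mu (lrw H k) Q mu nu k h s \<le> 2 / \<eta> * ((real H + 1) / (real H + real k)) + \<eta> * M * (real H)^2 / 2"
        using RM[OF h k lw0 lwm lw1, of s] bnd1[OF lr0 AM(1)] unfolding lrk A_def by linarith
      moreover have "reg_nu (lrw H k) Q mu nu k h s \<le> 2 / \<eta> * ((real H + 1) / (real H + real k)) + \<eta> * M * (real H)^2 / 2"
        using RN[OF h k lw0 lwm lw1, of s] bnd1[OF lr0 AM(2)] unfolding lrk B_def by linarith
      ultimately show "max (reg_mu (lrw H k) Q mu nu k h s) (reg_nu (lrw H k) Q mu nu k h s)
           \<le> 2 / \<eta> * ((real H + 1) / (real H + real k)) + \<eta> * M * (real H)^2 / 2" by simp
    qed
    thus "reg H Q mu nu k h \<le> 2 / \<eta> * ((real H + 1) / (real H + real k))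
        + \<eta> * real (max (card (UNIV :: 'a set)) (card (UNIV :: 'b set))) * (real H)^2 / 2"
      unfolding reg_def M_def by (simp add: Max_le_iff)
    define u where "u = (\<lambda>t::nat. 1 / real k)"
    have u0: "\<forall>t\<in>{1..k}. 0 \<le> u t" by (simp add: u_def)
    have um: "\<forall>t. 1 \<le> t \<longrightarrow> t < k \<longrightarrow> u t \<le> u (Suc t)" by (simp add: u_def)
    have u1: "(\<Sum>t=1..k. u t) = 1" using k by (simp add: u_def)
    have uk: "u k / \<eta> = 1 / (\<eta> * real k)" by (simp add: u_def)
    have "\<forall>s. reg_mu u Q mu nu k h s + reg_nu u Q mu nu k h s \<le> 4 / (\<eta> * real k) + \<eta> * (A + B) * (real H)^2 / 2"
    proof
      fix s
      have a: "reg_mu u Q mu nu k h s \<le> 1 / (\<eta> * real k) + \<eta> * (A * (real H)^2) / 2"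
        using RM[OF h k u0 um u1, of s] uk unfolding A_def by simp
      have b: "reg_nu u Q mu nu k h s \<le> 1 / (\<eta> * real k) + \<eta> * (B * (real H)^2) / 2"
        using RN[OF h k u0 um u1, of s] uk unfolding B_def by simp
      have c: "0 \<le> 1 / (\<eta> * real k)" using eta by simp
      have "\<eta> * (A * (real H)^2) / 2 + \<eta> * (B * (real H)^2) / 2 = \<eta> * (A + B) * (real H)^2 / 2"
        by (simp add: algebra_simps)
      moreover have "4 / (\<eta> * real k) = 4 * (1 / (\<eta> * real k))" by simp
      ultimately show "reg_mu u Q mu nu k h s + reg_nu u Q mu nu k h s \<le> 4 / (\<eta> * real k) + \<eta> * (A + B) * (real H)^2 / 2"
        using a b c by linarith
    qed
    thus "reg_bar (\<lambda>t. 1 / real k) Q mu nu k h \<le> 4 / (\<eta> * real k)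
        + \<eta> * (real (card (UNIV :: 'a set)) + real (card (UNIV :: 'b set))) * (real H)^2 / 2"
      unfolding reg_bar_def A_def B_def u_def by (simp add: Max_le_iff)
  qed
qed

end
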